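(* Let $X$ be a random vector in $\mathbb{R}^p$ with finite second moments and mean $\mu$, let $K\ge1$, $s>0$, and $\mathcal{W}=\{\mathbf{w}\in\mathbb{R}^p:\|\mathbf{w}\|_2^2\le1,\|\mathbf{w}\|_1\le s,w_j\ge0\ \forall j\}$. Then the map \[ (\mathbf{w},A)\mapsto \mathbb{E}\Bigl[\|X-\mu\|_{\mathbf{w}}^2-\min_{a\in A}\|X-a\|_{\mathbf{w}}^2\Bigr], \] defined for $\mathbf{w}\in\mathcal{W}$ and $A\subset\mathbb{R}^p$ with $\#A=K$, is continuous with respect to the metric $d((\mathbf{w}_1,A_1),(\mathbf{w}_2,A_2))=\max\{\|\mathbf{w}_1-\mathbf{w}_2\|,d_H(A_1,A_2)\}$, where $\|\cdot\|$ is the Euclidean norm and $d_H$ is the Hausdorff distance between subsets of $\mathbb{R}^p$ (with respect to the Euclidean metric).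
   Context: $\|\mathbf{x}\|_{\mathbf{w}}^2=\sum_{j=1}^p w_jx_j^2$. The Hausdorff distance is $d_H(A,B)=\max\{\sup_{x\in A}\inf_{y\in B}\|x-y\|,\ \sup_{y\in B}\inf_{x\in A}\|x-y\|\}$. *)

theory Defs
  imports "HOL-Analysis.Analysis" "HOL-Probability.Probability"
begin

definition wnorm2 :: "real^'p \<Rightarrow> real^'p \<Rightarrow> real" where
  "wnorm2 w x = (\<Sum>j\<in>UNIV. w$j * (x$j)^2)"

definition hausdorff_dist :: "'a::metric_space set \<Rightarrow> 'a set \<Rightarrow> real" where
  "hausdorff_dist A B = max (SUP x\<in>A. INF y\<in>B. dist x y) (SUP y\<in>B. INF x\<in>A. dist x y)"

definition weight_set :: "real \<Rightarrow> (real^'p) set" where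
  "weight_set s = {w. (norm w)^2 \<le> 1 \<and> (\<Sum>j\<in>UNIV. \<bar>w$j\<bar>) \<le> s \<and> (\<forall>j. w$j \<ge> 0)}"

definition objective :: "'a measure \<Rightarrow> ('a \<Rightarrow> real^'p) \<Rightarrow> real^'p \<Rightarrow> (real^'p) set \<Rightarrow> real" where
  "objective M X w A =
     (\<integral>\<omega>. wnorm2 w (X \<omega> - (\<integral>\<omega>'. X \<omega>' \<partial>M)) - Min ((\<lambda>a. wnorm2 w (X \<omega> - a)) ` A) \<partial>M)"

end

theory Submission
  imports Defs
begin


lemma normsq_vec: "(norm (y::real^'p))^2 = (\<Sum>j\<in>UNIV. (y$j)^2)"
  unfolding power2_norm_eq_inner inner_vec_def by (simp add: power2_eq_square)

lemma wnorm2_nonneg: "(\<forall>j. w$j \<ge> 0) \<Longrightarrow> wnorm2 w y \<ge> 0"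
  unfolding wnorm2_def by (intro sum_nonneg) auto

lemma wnorm2_zero[simp]: "wnorm2 0 y = 0"
  unfolding wnorm2_def by simp

lemma wnorm2_diff_w: "\<bar>wnorm2 w' y - wnorm2 w y\<bar> \<le> norm (w' - w) * (norm y)^2"
proof -
  have "\<bar>wnorm2 w' y - wnorm2 w y\<bar> = \<bar>\<Sum>j\<in>UNIV. (w'$j - w$j) * (y$j)^2\<bar>"
    unfolding wnorm2_def by (simp add: sum_subtractf left_diff_distrib)
  also have "\<dots> \<le> (\<Sum>j\<in>UNIV. \<bar>(w'$j - w$j) * (y$j)^2\<bar>)" by (rule sum_abs)
  also have "\<dots> \<le> (\<Sum>j\<in>UNIV. norm (w' - w) * (y$j)^2)"
  proof (intro sum_mono)
    fix j
    have "\<bar>w'$j - w$j\<bar> \<le> norm (w' - w)" using component_le_norm_cart[of "w' - w" j] by simp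
    then show "\<bar>(w'$j - w$j) * (y$j)^2\<bar> \<le> norm (w' - w) * (y$j)^2"
      by (simp add: abs_mult mult_right_mono)
  qed
  also have "\<dots> = norm (w' - w) * (norm y)^2" by (simp add: normsq_vec sum_distrib_left)
  finally show ?thesis .
qed

lemma wnorm2_le: "w \<in> weight_set s \<Longrightarrow> wnorm2 w y \<le> (norm y)^2"
proof -
  assume "w \<in> weight_set s"
  then have "norm w \<le> 1" unfolding weight_set_def by (simp add: power_le_one_iff)
  have "\<bar>wnorm2 w y - wnorm2 0 y\<bar> \<le> norm w * (norm y)^2" using wnorm2_diff_w[of w y 0] by simp
  also have "\<dots> \<le> (norm y)^2" using \<open>norm w \<le> 1\<close> by (simp add: mult_left_le_one_le)
  finally show ?thesis by simp
qed

lemma wnorm2_diff_y: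
  assumes "w \<in> weight_set s"
  shows "\<bar>wnorm2 w y - wnorm2 w z\<bar> \<le> norm (y - z) * (norm y + norm z)"
proof -
  have n: "norm w \<le> 1" using assms unfolding weight_set_def by (simp add: power_le_one_iff)
  have w01: "0 \<le> w$j \<and> w$j \<le> 1" for j
    using assms component_le_norm_cart[of w j] n unfolding weight_set_def by auto
  have "\<bar>wnorm2 w y - wnorm2 w z\<bar> = \<bar>\<Sum>j\<in>UNIV. w$j * ((y$j - z$j) * (y$j + z$j))\<bar>"
    unfolding wnorm2_def by (simp add: sum_subtractf algebra_simps power2_eq_square)
  also have "\<dots> \<le> (\<Sum>j\<in>UNIV. \<bar>w$j * ((y$j - z$j) * (y$j + z$j))\<bar>)" by (rule sum_abs)
  also have "\<dots> \<le> (\<Sum>j\<in>UNIV. \<bar>y$j - z$j\<bar> * \<bar>y$j + z$j\<bar>)"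
  proof (intro sum_mono)
    fix j
    have "\<bar>w$j\<bar> * (\<bar>y$j - z$j\<bar> * \<bar>y$j + z$j\<bar>) \<le> 1 * (\<bar>y$j - z$j\<bar> * \<bar>y$j + z$j\<bar>)"
      using w01[of j] by (intro mult_right_mono) auto
    then show "\<bar>w$j * ((y$j - z$j) * (y$j + z$j))\<bar> \<le> \<bar>y$j - z$j\<bar> * \<bar>y$j + z$j\<bar>"
      by (simp add: abs_mult)
  qed
  also have "\<dots> \<le> norm (y - z) * norm (y + z)"
  proof -
    let ?S = "(\<Sum>j\<in>UNIV. \<bar>y$j - z$j\<bar> * \<bar>y$j + z$j\<bar>)"
    have "?S^2 \<le> (\<Sum>j\<in>UNIV. \<bar>y$j - z$j\<bar>^2) * (\<Sum>j\<in>UNIV. \<bar>y$j + z$j\<bar>^2)"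
      by (rule Cauchy_Schwarz_ineq_sum)
    also have "\<dots> = (norm (y - z) * norm (y + z))^2"
      by (simp add: normsq_vec power_mult_distrib)
    finally have "?S^2 \<le> (norm (y - z) * norm (y + z))^2" .
    then show ?thesis by (rule power2_le_imp_le) simp
  qed
  also have "\<dots> \<le> norm (y - z) * (norm y + norm z)"
    by (intro mult_left_mono norm_triangle_ineq) auto
  finally show ?thesis .
qed

lemma min_close:
  fixes g h :: "'b \<Rightarrow> real"
  assumes "finite A" "A \<noteq> {}" "finite B" "B \<noteq> {}"
    and "\<forall>a\<in>A. \<exists>b\<in>B. h b \<le> g a + e" and "\<forall>b\<in>B. \<exists>a\<in>A. g a \<le> h b + e"
  shows "\<bar>Min (h ` B) - Min (g ` A)\<bar> \<le> e"
proof -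
  have "Min (g ` A) \<in> g ` A" using assms(1,2) by (intro Min_in) auto
  then obtain a where a: "a \<in> A" "g a = Min (g ` A)" by (auto simp del: Min_in)
  have "Min (h ` B) \<in> h ` B" using assms(3,4) by (intro Min_in) auto
  then obtain b where b: "b \<in> B" "h b = Min (h ` B)" by (auto simp del: Min_in)
  obtain b' where "b' \<in> B" "h b' \<le> g a + e" using assms(5) a by blast
  moreover have "Min (h ` B) \<le> h b'" using \<open>b' \<in> B\<close> assms(3) by simp
  moreover obtain a' where "a' \<in> A" "g a' \<le> h b + e" using assms(6) b by blast
  moreover have "Min (g ` A) \<le> g a'" using \<open>a' \<in> A\<close> assms(1) by simp
  ultimately show ?thesis using a b by linarith
qed

lemma min_measurable:
  assumes "finite A" "A \<noteq> {}" "\<And>a. a \<in> A \<Longrightarrow> (\<lambda>\<omega>. g a \<omega>) \<in> borel_measurable M"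
  shows "(\<lambda>\<omega>. Min ((\<lambda>a. g a \<omega> :: real) ` A)) \<in> borel_measurable M"
  using assms
proof (induction A rule: finite_ne_induct)
  case (singleton x) then show ?case by simp
next
  case (insert x F)
  have "(\<lambda>\<omega>. Min ((\<lambda>a. g a \<omega>) ` insert x F)) = (\<lambda>\<omega>. min (g x \<omega>) (Min ((\<lambda>a. g a \<omega>) ` F)))"
    using insert.hyps by (simp add: Min_insert)
  then show ?case using insert by (simp add: borel_measurable_min)
qed

lemma wn_meas:
  assumes "X \<in> borel_measurable M"
  shows "(\<lambda>\<omega>. wnorm2 w (X \<omega> - a)) \<in> borel_measurable M"
proof -
  have "continuous_on UNIV (\<lambda>v. wnorm2 w (v - a))"
    unfolding wnorm2_def by (intro continuous_intros)
  then show ?thesis by (rule borel_measurable_continuous_on[OF _ assms])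
qed


lemma sq_int:
  assumes "prob_space M" "integrable M (\<lambda>\<omega>. (norm (X \<omega>))^2)" "X \<in> borel_measurable M"
  shows "integrable M (\<lambda>\<omega>. (norm (X \<omega>) + c)^2)"
proof -
  interpret prob_space M by fact
  have i: "integrable M (\<lambda>\<omega>. 2 * (norm (X \<omega>))^2 + 2 * c^2)"
    using assms(2) by simp
  show ?thesis
  proof (rule Bochner_Integration.integrable_bound[OF i])
    show "(\<lambda>\<omega>. (norm (X \<omega>) + c)^2) \<in> borel_measurable M" using assms(3) by measurable
    show "AE x in M. norm ((norm (X x) + c)^2) \<le> norm (2 * (norm (X x))^2 + 2 * c^2)"
    proof (intro AE_I2)
      fix x
      have "(norm (X x) + c)^2 \<le> 2 * (norm (X x))^2 + 2 * c^2"
        using sum_squares_bound[of "norm (X x)" c] by (simp add: power2_eq_square algebra_simps)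
      then show "norm ((norm (X x) + c)^2) \<le> norm (2 * (norm (X x))^2 + 2 * c^2)" by simp
    qed
  qed
qed

lemma f_int:
  assumes "prob_space M" "integrable M (\<lambda>\<omega>. (norm (X \<omega>))^2)" "X \<in> borel_measurable M"
    and "w \<in> weight_set s" "finite A" "A \<noteq> {}"
  shows "integrable M (\<lambda>\<omega>. wnorm2 w (X \<omega> - \<mu>) - Min ((\<lambda>a. wnorm2 w (X \<omega> - a)) ` A))"
proof -
  obtain a0 where a0: "a0 \<in> A" using assms(6) by blast
  define C where "C = norm \<mu> + norm a0"
  have i: "integrable M (\<lambda>\<omega>. 2 * (norm (X \<omega>) + C)^2)"
    using sq_int[OF assms(1-3), of C] by simp
  have wn: "\<forall>j. 0 \<le> w$j" using assms(4) unfolding weight_set_def by simp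
  show ?thesis
  proof (rule Bochner_Integration.integrable_bound[OF i])
    show "(\<lambda>\<omega>. wnorm2 w (X \<omega> - \<mu>) - Min ((\<lambda>a. wnorm2 w (X \<omega> - a)) ` A)) \<in> borel_measurable M"
      using wn_meas[OF assms(3)] min_measurable[OF assms(5,6), of "\<lambda>a \<omega>. wnorm2 w (X \<omega> - a)" M]
      by (intro borel_measurable_diff) auto
    show "AE x in M. norm (wnorm2 w (X x - \<mu>) - Min ((\<lambda>a. wnorm2 w (X x - a)) ` A))
           \<le> norm (2 * (norm (X x) + C)^2)"
    proof (intro AE_I2)
      fix x
      let ?m = "Min ((\<lambda>a. wnorm2 w (X x - a)) ` A)"
      have m0: "?m \<ge> 0" using assms(5,6) wnorm2_nonneg[OF wn] by (subst Min_ge_iff) auto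
      have m1: "?m \<le> wnorm2 w (X x - a0)" using assms(5) a0 by simp
      have b1: "wnorm2 w (X x - \<mu>) \<le> (norm (X x) + C)^2"
      proof -
        have "norm (X x - \<mu>) \<le> norm (X x) + C" unfolding C_def using norm_triangle_ineq4[of "X x" \<mu>] norm_ge_zero[of a0] by linarith
        then have "(norm (X x - \<mu>))^2 \<le> (norm (X x) + C)^2" by (intro power_mono) auto
        then show ?thesis using wnorm2_le[OF assms(4)] order_trans by blast
      qed
      have b2: "wnorm2 w (X x - a0) \<le> (norm (X x) + C)^2"
      proof -
        have "norm (X x - a0) \<le> norm (X x) + C" unfolding C_def using norm_triangle_ineq4[of "X x" a0] norm_ge_zero[of \<mu>] by linarith
        then have "(norm (X x - a0))^2 \<le> (norm (X x) + C)^2" by (intro power_mono) auto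
        then show ?thesis using wnorm2_le[OF assms(4)] order_trans by blast
      qed
      have "wnorm2 w (X x - \<mu>) \<ge> 0" using wnorm2_nonneg[OF wn] .
      then show "norm (wnorm2 w (X x - \<mu>) - ?m) \<le> norm (2 * (norm (X x) + C)^2)"
        using m0 m1 b1 b2 by simp
    qed
  qed
qed

lemma haus_close:
  fixes A B :: "(real^'p) set"
  assumes "finite A" "A \<noteq> {}" "finite B" "B \<noteq> {}" "hausdorff_dist B A < d"
  shows "\<forall>b\<in>B. \<exists>a\<in>A. dist b a < d" and "\<forall>a\<in>A. \<exists>b\<in>B. dist b a < d"
proof -
  show "\<forall>b\<in>B. \<exists>a\<in>A. dist b a < d"
  proof
    fix b assume b: "b \<in> B"
    have "(INF y\<in>A. dist b y) \<le> (SUP x\<in>B. INF y\<in>A. dist x y)"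
      using b assms(3) by (intro cSUP_upper) auto
    also have "\<dots> < d" using assms(5) unfolding hausdorff_dist_def by simp
    finally have "(INF y\<in>A. dist b y) < d" .
    moreover have "bdd_below ((\<lambda>y. dist b y) ` A)" using assms(1) by (simp add: bdd_below_finite)
    ultimately show "\<exists>a\<in>A. dist b a < d" using cINF_less_iff[OF assms(2)] by blast
  qed
  show "\<forall>a\<in>A. \<exists>b\<in>B. dist b a < d"
  proof
    fix a assume a: "a \<in> A"
    have "(INF x\<in>B. dist x a) \<le> (SUP y\<in>A. INF x\<in>B. dist x y)"
      using a assms(1) by (intro cSUP_upper) auto
    also have "\<dots> < d" using assms(5) unfolding hausdorff_dist_def by simp
    finally have "(INF x\<in>B. dist x a) < d" .
    moreover have "bdd_below ((\<lambda>x. dist x a) ` B)" using assms(3) by (simp add: bdd_below_finite)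
    ultimately show "\<exists>b\<in>B. dist b a < d" using cINF_less_iff[OF assms(4)] by blast
  qed
qed

lemma pair_bound:
  assumes w: "w \<in> weight_set s" and nw: "norm (w' - w) \<le> d" and d1: "d \<le> 1" and d0: "0 \<le> d"
    and da: "dist a' a < d" and na: "norm a \<le> R" and c: "R + 1 \<le> c" and R0: "0 \<le> R"
  shows "\<bar>wnorm2 w' (y - a') - wnorm2 w (y - a)\<bar> \<le> d * ((norm y + c)^2 + 2 * (norm y + c))"
proof -
  have na': "norm a' \<le> R + 1"
    using da d1 na norm_triangle_ineq2[of a' a] by (simp add: dist_norm)
  have y1: "norm (y - a') \<le> norm y + c" using norm_triangle_ineq4[of y a'] na' c by linarith
  have y2: "norm (y - a) \<le> norm y + c" using norm_triangle_ineq4[of y a] na c by linarith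
  have t1: "\<bar>wnorm2 w' (y - a') - wnorm2 w (y - a')\<bar> \<le> d * (norm y + c)^2"
  proof -
    have "\<bar>wnorm2 w' (y - a') - wnorm2 w (y - a')\<bar> \<le> norm (w' - w) * (norm (y - a'))^2"
      by (rule wnorm2_diff_w)
    also have "\<dots> \<le> d * (norm y + c)^2"
      using nw y1 d0 by (intro mult_mono power_mono) auto
    finally show ?thesis .
  qed
  have t2: "\<bar>wnorm2 w (y - a') - wnorm2 w (y - a)\<bar> \<le> d * (2 * (norm y + c))"
  proof -
    have "\<bar>wnorm2 w (y - a') - wnorm2 w (y - a)\<bar> \<le> norm ((y - a') - (y - a)) * (norm (y - a') + norm (y - a))"
      by (rule wnorm2_diff_y[OF w])
    also have "\<dots> \<le> d * (2 * (norm y + c))"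
    proof (intro mult_mono)
      show "norm ((y - a') - (y - a)) \<le> d" using da by (simp add: dist_norm norm_minus_commute)
    qed (use y1 y2 d0 in auto)
    finally show ?thesis .
  qed
  show ?thesis using t1 t2 by (simp add: algebra_simps)
qed

theorem theorem2:
  fixes M :: "'a measure" and X :: "'a \<Rightarrow> real^'p" and K :: nat and s :: real
  assumes "prob_space M"
    and "X \<in> borel_measurable M"
    and "integrable M (\<lambda>\<omega>. (norm (X \<omega>))^2)"
    and "K \<ge> 1" and "s > 0"
  shows "\<forall>w A. w \<in> weight_set s \<and> finite A \<and> card A = K \<longrightarrow>
           (\<forall>\<epsilon>>0. \<exists>\<delta>>0. \<forall>w' A'. w' \<in> weight_set s \<and> finite A' \<and> card A' = K \<and>
              max (norm (w' - w)) (hausdorff_dist A' A) < \<delta> \<longrightarrow>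
              \<bar>objective M X w' A' - objective M X w A\<bar> < \<epsilon>)"
proof (intro allI impI)
  interpret P: prob_space M by fact
  fix w :: "real^'p" and A :: "(real^'p) set" and \<epsilon> :: real
  assume wA: "w \<in> weight_set s \<and> finite A \<and> card A = K" and e: "(\<epsilon>::real) > 0"
  have w: "w \<in> weight_set s" and fA: "finite A" and A0: "A \<noteq> {}"
    using wA assms(4) by auto
  define \<mu> where "\<mu> = (\<integral>\<omega>'. X \<omega>' \<partial>M)"
  define R where "R = (\<Sum>a\<in>A. norm a)"
  define c where "c = norm \<mu> + R + 1"
  define D where "D = (\<lambda>\<omega>. 3 * (norm (X \<omega>) + c)^2 + 1)"
  have R0: "0 \<le> R" unfolding R_def by (simp add: sum_nonneg)
  have naR: "norm a \<le> R" if "a \<in> A" for a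
    unfolding R_def using fA that by (intro member_le_sum) auto
  have Dint: "integrable M D"
    unfolding D_def using sq_int[OF assms(1,3,2), of c] by simp
  define E where "E = integral\<^sup>L M D"
  have E0: "0 \<le> E" unfolding E_def D_def by (intro integral_nonneg_AE) auto
  define \<delta> where "\<delta> = min 1 (\<epsilon> / (E + 1))"
  have d0: "\<delta> > 0" unfolding \<delta>_def using e E0 by simp
  have dE: "\<delta> * E < \<epsilon>"
  proof -
    have "\<delta> * E \<le> (\<epsilon> / (E + 1)) * E" unfolding \<delta>_def using E0 by (intro mult_right_mono) auto
    also have "\<dots> < \<epsilon>" using e E0 by (simp add: field_simps)
    finally show ?thesis .
  qed
  show "\<exists>\<delta>>0. \<forall>(w'::real^'p) A'. w' \<in> weight_set s \<and> finite A' \<and> card A' = K \<and>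
              max (norm (w' - w)) (hausdorff_dist A' A) < \<delta> \<longrightarrow>
              \<bar>objective M X w' A' - objective M X w A\<bar> < \<epsilon>"
  proof (intro exI[of _ \<delta>] conjI allI impI d0)
    fix w' A'
    assume H: "w' \<in> weight_set s \<and> finite A' \<and> card A' = K \<and> max (norm (w' - w)) (hausdorff_dist A' A) < \<delta>"
    have w': "w' \<in> weight_set s" and fA': "finite A'" and A'0: "A' \<noteq> {}"
      using H assms(4) by auto
    have nw: "norm (w' - w) \<le> \<delta>" using H by simp
    have hd: "hausdorff_dist A' A < \<delta>" using H by simp
    note hc = haus_close[OF fA A0 fA' A'0 hd]
    have d1: "\<delta> \<le> 1" unfolding \<delta>_def by simp
    define f where "f = (\<lambda>\<omega>. wnorm2 w (X \<omega> - \<mu>) - Min ((\<lambda>a. wnorm2 w (X \<omega> - a)) ` A))"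
    define f' where "f' = (\<lambda>\<omega>. wnorm2 w' (X \<omega> - \<mu>) - Min ((\<lambda>a. wnorm2 w' (X \<omega> - a)) ` A'))"
    have fi: "integrable M f" unfolding f_def by (rule f_int[OF assms(1,3,2) w fA A0])
    have fi': "integrable M f'" unfolding f'_def by (rule f_int[OF assms(1,3,2) w' fA' A'0])
    have pw: "\<bar>f' \<omega> - f \<omega>\<bar> \<le> \<delta> * D \<omega>" for \<omega>
    proof -
      let ?y = "X \<omega>"
      let ?e = "\<delta> * ((norm ?y + c)^2 + 2 * (norm ?y + c))"
      have T1: "\<bar>wnorm2 w' (?y - \<mu>) - wnorm2 w (?y - \<mu>)\<bar> \<le> \<delta> * (norm ?y + c)^2"
      proof -
        have "\<bar>wnorm2 w' (?y - \<mu>) - wnorm2 w (?y - \<mu>)\<bar> \<le> norm (w' - w) * (norm (?y - \<mu>))^2"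
          by (rule wnorm2_diff_w)
        also have "\<dots> \<le> \<delta> * (norm ?y + c)^2"
        proof (intro mult_mono power_mono)
          show "norm (?y - \<mu>) \<le> norm ?y + c"
            using norm_triangle_ineq4[of ?y \<mu>] R0 unfolding c_def by linarith
        qed (use nw d0 in auto)
        finally show ?thesis .
      qed
      have T2: "\<bar>Min ((\<lambda>a. wnorm2 w' (?y - a)) ` A') - Min ((\<lambda>a. wnorm2 w (?y - a)) ` A)\<bar> \<le> ?e"
      proof (rule min_close[OF fA A0 fA' A'0])
        have cc: "R + 1 \<le> c" unfolding c_def by simp
        show "\<forall>a\<in>A. \<exists>b\<in>A'. wnorm2 w' (?y - b) \<le> wnorm2 w (?y - a) + ?e"
        proof
          fix a assume a: "a \<in> A"
          then obtain b where b: "b \<in> A'" "dist b a < \<delta>" using hc(2) by blast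
          have "\<bar>wnorm2 w' (?y - b) - wnorm2 w (?y - a)\<bar> \<le> ?e"
            by (rule pair_bound[OF w nw d1 _ b(2) naR[OF a] cc R0]) (use d0 in simp)
          then have "wnorm2 w' (?y - b) \<le> wnorm2 w (?y - a) + ?e" by (auto dest: abs_le_D1)
          then show "\<exists>b\<in>A'. wnorm2 w' (?y - b) \<le> wnorm2 w (?y - a) + ?e" using b(1) by blast
        qed
        show "\<forall>b\<in>A'. \<exists>a\<in>A. wnorm2 w (?y - a) \<le> wnorm2 w' (?y - b) + ?e"
        proof
          fix b assume b: "b \<in> A'"
          then obtain a where a: "a \<in> A" "dist b a < \<delta>" using hc(1) by blast
          have "\<bar>wnorm2 w' (?y - b) - wnorm2 w (?y - a)\<bar> \<le> ?e"
            by (rule pair_bound[OF w nw d1 _ a(2) naR[OF a(1)] cc R0]) (use d0 in simp)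
          then have "wnorm2 w (?y - a) \<le> wnorm2 w' (?y - b) + ?e" by (auto dest: abs_le_D2)
          then show "\<exists>a\<in>A. wnorm2 w (?y - a) \<le> wnorm2 w' (?y - b) + ?e" using a(1) by blast
        qed
      qed
      have "\<bar>f' \<omega> - f \<omega>\<bar> \<le> \<delta> * (norm ?y + c)^2 + ?e"
        using T1 T2 unfolding f_def f'_def by linarith
      also have "\<dots> \<le> \<delta> * D \<omega>"
      proof -
        have "2 * (norm ?y + c) \<le> (norm ?y + c)^2 + 1"
          using sum_squares_bound[of "norm ?y + c" 1] by (simp add: power2_eq_square algebra_simps)
        then have "(norm ?y + c)^2 + ((norm ?y + c)^2 + 2 * (norm ?y + c)) \<le> D \<omega>"
          unfolding D_def by simp
        then have "\<delta> * ((norm ?y + c)^2 + ((norm ?y + c)^2 + 2 * (norm ?y + c))) \<le> \<delta> * D \<omega>"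
          using d0 by (intro mult_left_mono) auto
        then show ?thesis by (simp add: algebra_simps)
      qed
      finally show ?thesis .
    qed
    have o1: "objective M X w' A' = integral\<^sup>L M f'"
      unfolding objective_def f'_def \<mu>_def by simp
    have o2: "objective M X w A = integral\<^sup>L M f"
      unfolding objective_def f_def \<mu>_def by simp
    have obj: "objective M X w' A' - objective M X w A = (\<integral>\<omega>. f' \<omega> - f \<omega> \<partial>M)"
      unfolding o1 o2 by (rule Bochner_Integration.integral_diff[OF fi' fi, symmetric])
    have i1: "integrable M (\<lambda>\<omega>. f' \<omega> - f \<omega>)" by (rule Bochner_Integration.integrable_diff[OF fi' fi])
    have i2: "integrable M (\<lambda>\<omega>. \<delta> * D \<omega>)" using Dint by simp
    have "\<bar>\<integral>\<omega>. f' \<omega> - f \<omega> \<partial>M\<bar> \<le> (\<integral>\<omega>. norm (f' \<omega> - f \<omega>) \<partial>M)"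
      using integral_norm_bound[of M "\<lambda>\<omega>. f' \<omega> - f \<omega>"] by simp
    also have "\<dots> \<le> (\<integral>\<omega>. \<delta> * D \<omega> \<partial>M)"
      by (rule integral_mono[OF integrable_norm[OF i1] i2]) (use pw in simp)
    also have "\<dots> = \<delta> * E" unfolding E_def by simp
    finally show "\<bar>objective M X w' A' - objective M X w A\<bar> < \<epsilon>" using obj dE by linarith
  qed
qed

end
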